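(* Let $h$ be a bilinear form on $V$, $\bar h=\mathcal T(h)$ the associated endomorphism of $V$ (so $\langle\bar h(v),w\rangle=h(v,w)$), and $\widehat h$ the unique exterior algebra endomorphism of $\Lambda V$ extending $\bar h$ with $\widehat h(1)=1$, i.e. $\widehat h(v_1\wedge\cdots\wedge v_p)=\bar h(v_1)\wedge\cdots\wedge\bar h(v_p)$. Then $$\mathcal T(e^h)=\mathcal T\Big(\sum_{p\geq0}\frac{h^p}{p!}\Big)=\widehat h,$$ where $h^0=1$ and $h^p=0$ for $p>n$. In particular $\mathcal T\big(\frac{g^p}{p!}\big)=\mathrm{Id}_{\Lambda^pV}$.
   Context: $(V,g)$ is a Euclidean real vector space of dimension $n$, identified with $V^*$ via $g$. Double forms are elements of $\bigoplus_{p,q}\Lambda^pV^*\otimes\Lambda^qV^*$, a $(p,q)$ double form being viewed as a bilinear form on $\Lambda^pV\times\Lambda^qV$; bilinear forms on $V$ are $(1,1)$ double forms, and $g$ itself is one. Exterior product: $(\theta_1\otimes\theta_2)(\theta_3\otimes\theta_4)=(\theta_1\wedge\theta_3)\otimes(\theta_2\wedge\theta_4)$, extended bilinearly; $h^p$ is the $p$-th power for it. $\Lambda V$ carries the inner product induced by $g$. The linear isomorphism $\mathcal T$ from double forms to $L(\Lambda V,\Lambda V)$ is $\mathcal T(\omega_1\otimes\omega_2)(\theta)=\langle\omega_1^\sharp,\theta\rangle\omega_2^\sharp$, where $\omega^\sharp$ is the exterior vector dual to the form $\omega$; equivalently $\langle\mathcal T(\omega)u_1,u_2\rangle=\omega(u_1,u_2)$.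 *)

theory Defs
  imports Complex_Main
begin

text \<open>V is Euclidean n-space with orthonormal basis e_0,...,e_(n-1)
  (indices in {..<n}); V is identified with its dual via the inner product, so the dual
  basis is the same basis. Lambda V has orthonormal basis e_I (I a subset of {..<n}),
  e_I = e_(i1) wedge ... wedge e_(ip) for i1 < ... < ip. An exterior vector is given by
  its coefficient function nat set => real (only subsets of {..<n} are relevant).
  A double form is an element of Lambda V* tensor Lambda V*, given by its coefficients
  w(I,J) on the basis e_I tensor e_J; as a bilinear form it maps (u1,u2) to
  sum_(I,J) w(I,J) u1(I) u2(J).\<close>

definition sgn2 :: "nat set \<Rightarrow> nat set \<Rightarrow> real" where
  "sgn2 I K = (-1) ^ card {(i,k). i \<in> I \<and> k \<in> K \<and> k < i}"

text \<open>Exterior product on Lambda V: e_I wedge e_K = sgn2 I K e_(I union K) if I, K disjoint, else 0.\<close>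
definition ext_wedge :: "nat \<Rightarrow> (nat set \<Rightarrow> real) \<Rightarrow> (nat set \<Rightarrow> real) \<Rightarrow> (nat set \<Rightarrow> real)" where
  "ext_wedge n u w = (\<lambda>M. if M \<subseteq> {..<n}
      then (\<Sum>I\<in>Pow M. sgn2 I (M - I) * u I * w (M - I)) else 0)"

definition ext_one :: "nat set \<Rightarrow> real" where
  "ext_one = (\<lambda>I. if I = {} then 1 else 0)"

definition ext_wedge_list :: "nat \<Rightarrow> (nat set \<Rightarrow> real) list \<Rightarrow> (nat set \<Rightarrow> real)" where
  "ext_wedge_list n vs = foldr (ext_wedge n) vs ext_one"

definition ext_of_vec :: "nat \<Rightarrow> (nat \<Rightarrow> real) \<Rightarrow> (nat set \<Rightarrow> real)" where
  "ext_of_vec n v = (\<lambda>I. if (\<exists>i<n. I = {i}) then v (the_elem I) else 0)"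

definition basis_vec :: "nat \<Rightarrow> (nat \<Rightarrow> real)" where
  "basis_vec i = (\<lambda>j. if j = i then 1 else 0)"

text \<open>Exterior product of double forms:
  (e_I tensor e_J)(e_K tensor e_L) = (e_I wedge e_K) tensor (e_J wedge e_L).\<close>
definition dform_mult :: "nat \<Rightarrow> (nat set \<Rightarrow> nat set \<Rightarrow> real) \<Rightarrow> (nat set \<Rightarrow> nat set \<Rightarrow> real)
    \<Rightarrow> (nat set \<Rightarrow> nat set \<Rightarrow> real)" where
  "dform_mult n \<omega> \<eta> = (\<lambda>M N. if M \<subseteq> {..<n} \<and> N \<subseteq> {..<n}
      then (\<Sum>I\<in>Pow M. \<Sum>J\<in>Pow N. sgn2 I (M - I) * sgn2 J (N - J) * \<omega> I J * \<eta> (M - I) (N - J))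
      else 0)"

definition dform_one :: "nat set \<Rightarrow> nat set \<Rightarrow> real" where
  "dform_one = (\<lambda>I J. if I = {} \<and> J = {} then 1 else 0)"

primrec dform_pow :: "nat \<Rightarrow> (nat set \<Rightarrow> nat set \<Rightarrow> real) \<Rightarrow> nat \<Rightarrow> (nat set \<Rightarrow> nat set \<Rightarrow> real)" where
  "dform_pow n \<omega> 0 = dform_one"
| "dform_pow n \<omega> (Suc p) = dform_mult n (dform_pow n \<omega> p) \<omega>"

definition dform_of_bilin :: "nat \<Rightarrow> (nat \<Rightarrow> nat \<Rightarrow> real) \<Rightarrow> (nat set \<Rightarrow> nat set \<Rightarrow> real)" where
  "dform_of_bilin n h = (\<lambda>I J. if (\<exists>i<n. I = {i}) \<and> (\<exists>j<n. J = {j})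
      then h (the_elem I) (the_elem J) else 0)"

text \<open>e^w = sum_(p>=0) w^p/p!; all terms with p > n vanish, so the sum is taken over p <= n.\<close>
definition dform_exp :: "nat \<Rightarrow> (nat set \<Rightarrow> nat set \<Rightarrow> real) \<Rightarrow> (nat set \<Rightarrow> nat set \<Rightarrow> real)" where
  "dform_exp n \<omega> = (\<lambda>I J. \<Sum>p\<le>n. dform_pow n \<omega> p I J / fact p)"

text \<open>The isomorphism T: <T(w) u1, u2> = w(u1,u2), i.e. T(e_I tensor e_J)(u) = u(I) e_J.\<close>
definition Tmap :: "nat \<Rightarrow> (nat set \<Rightarrow> nat set \<Rightarrow> real) \<Rightarrow> (nat set \<Rightarrow> real) \<Rightarrow> (nat set \<Rightarrow> real)" where
  "Tmap n \<omega> u = (\<lambda>J. if J \<subseteq> {..<n} then (\<Sum>I\<in>Pow {..<n}. \<omega> I J * u I) else 0)"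

definition bilin_endo :: "nat \<Rightarrow> (nat \<Rightarrow> nat \<Rightarrow> real) \<Rightarrow> (nat \<Rightarrow> real) \<Rightarrow> (nat \<Rightarrow> real)" where
  "bilin_endo n h v = (\<lambda>j. if j < n then (\<Sum>i<n. h i j * v i) else 0)"

definition ext_hat :: "nat \<Rightarrow> (nat \<Rightarrow> nat \<Rightarrow> real) \<Rightarrow> (nat set \<Rightarrow> real) \<Rightarrow> (nat set \<Rightarrow> real)" where
  "ext_hat n h u = (\<lambda>J. \<Sum>I\<in>Pow {..<n}. u I *
      ext_wedge_list n (map (\<lambda>i. ext_of_vec n (bilin_endo n h (basis_vec i)))
                            (sorted_list_of_set I)) J)"

definition metric_g :: "nat \<Rightarrow> nat \<Rightarrow> real" where
  "metric_g = (\<lambda>i j. if i = j then 1 else 0)"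

end

theory Submission imports Defs begin

lemma sgn2_union_right:
  assumes "finite I" "finite K" "finite L" "K \<inter> L = {}"
  shows "sgn2 I (K \<union> L) = sgn2 I K * sgn2 I L"
proof -
  have e: "{(i,k). i \<in> I \<and> k \<in> K \<union> L \<and> k < i} =
    {(i,k). i \<in> I \<and> k \<in> K \<and> k < i} \<union> {(i,k). i \<in> I \<and> k \<in> L \<and> k < i}" by auto
  have f1: "finite {(i,k). i \<in> I \<and> k \<in> K \<and> k < i}"
    by (rule finite_subset[of _ "I \<times> K"]) (use assms in auto)
  have f2: "finite {(i,k). i \<in> I \<and> k \<in> L \<and> k < i}"
    by (rule finite_subset[of _ "I \<times> L"]) (use assms in auto)
  have d: "{(i,k). i \<in> I \<and> k \<in> K \<and> k < i} \<inter> {(i,k). i \<in> I \<and> k \<in> L \<and> k < i} = {}"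
    using assms(4) by auto
  show ?thesis unfolding sgn2_def e
    by (simp add: card_Un_disjoint[OF f1 f2 d] power_add)
qed

lemma sgn2_union_left:
  assumes "finite I" "finite J" "finite K" "I \<inter> J = {}"
  shows "sgn2 (I \<union> J) K = sgn2 I K * sgn2 J K"
proof -
  have e: "{(i,k). i \<in> I \<union> J \<and> k \<in> K \<and> k < i} =
    {(i,k). i \<in> I \<and> k \<in> K \<and> k < i} \<union> {(i,k). i \<in> J \<and> k \<in> K \<and> k < i}" by auto
  have f1: "finite {(i,k). i \<in> I \<and> k \<in> K \<and> k < i}"
    by (rule finite_subset[of _ "I \<times> K"]) (use assms in auto)
  have f2: "finite {(i,k). i \<in> J \<and> k \<in> K \<and> k < i}"
    by (rule finite_subset[of _ "J \<times> K"]) (use assms in auto)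
  have d: "{(i,k). i \<in> I \<and> k \<in> K \<and> k < i} \<inter> {(i,k). i \<in> J \<and> k \<in> K \<and> k < i} = {}"
    using assms(4) by auto
  show ?thesis unfolding sgn2_def e
    by (simp add: card_Un_disjoint[OF f1 f2 d] power_add)
qed

lemma sgn2_single: "sgn2 {a} {b} = (if b < a then -1 else 1)"
proof -
  have "{(i,k). i \<in> {a} \<and> k \<in> {b} \<and> k < i} = (if b < a then {(a,b)} else {})" by auto
  then show ?thesis unfolding sgn2_def by simp
qed

lemma sgn2_empty_left[simp]: "sgn2 {} K = 1" unfolding sgn2_def by simp
lemma sgn2_empty_right[simp]: "sgn2 I {} = 1" unfolding sgn2_def by simp

lemma sgn2_sq: "sgn2 I K * sgn2 I K = 1"
  unfolding sgn2_def by (simp flip: power_add add: power_even_eq[symmetric] mult_2[symmetric])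

lemma sgn2_min: "(\<And>s. s \<in> S \<Longrightarrow> m \<le> s) \<Longrightarrow> sgn2 {m} S = 1"
proof -
  assume a: "\<And>s. s \<in> S \<Longrightarrow> m \<le> s"
  have e: "{(i,k). i \<in> {m} \<and> k \<in> S \<and> k < i} = {}" using a by fastforce
  show ?thesis unfolding sgn2_def e by simp
qed

lemma sgn2_swap_single:
  assumes "finite S" "x \<notin> S"
  shows "sgn2 S {x} * sgn2 {x} S = (-1) ^ card S"
  using assms
proof (induction S rule: finite_induct)
  case empty then show ?case by simp
next
  case (insert a S)
  have ax: "a \<noteq> x" using insert by auto
  have l: "sgn2 (insert a S) {x} = sgn2 {a} {x} * sgn2 S {x}"
    using sgn2_union_left[of "{a}" S "{x}"] insert by simp
  have r: "sgn2 {x} (insert a S) = sgn2 {x} {a} * sgn2 {x} S"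
    using sgn2_union_right[of "{x}" "{a}" S] insert by simp
  have s: "sgn2 {a} {x} * sgn2 {x} {a} = -1" using ax by (auto simp: sgn2_single)
  have "sgn2 (insert a S) {x} * sgn2 {x} (insert a S) =
     (sgn2 {a} {x} * sgn2 {x} {a}) * (sgn2 S {x} * sgn2 {x} S)" by (simp add: l r)
  also have "\<dots> = (-1) ^ card (insert a S)" using s insert by simp
  finally show ?case .
qed


lemma sum_pow_singleton:
  fixes n :: nat
  assumes "N \<subseteq> {..<n}"
  shows "(\<Sum>I\<in>Pow N. if (\<exists>i<n. I = {i}) then g I else 0) = (\<Sum>k\<in>N. g {k})"
proof -
  have fin: "finite N" by (rule finite_subset[OF assms]) simp
  have "(\<Sum>I\<in>Pow N. if (\<exists>i<n. I = {i}) then g I else 0) = (\<Sum>I\<in>(\<lambda>k. {k}) ` N. g I)"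
    by (rule sum.mono_neutral_cong_right) (use fin assms in auto)
  also have "\<dots> = (\<Sum>k\<in>N. g {k})" by (subst sum.reindex) (auto simp: inj_on_def)
  finally show ?thesis .
qed

lemma sum_pow_compl: "finite M \<Longrightarrow> (\<Sum>I\<in>Pow M. f I) = (\<Sum>I\<in>Pow M. f (M - I))"
  by (rule sum.reindex_bij_witness[where i="\<lambda>I. M - I" and j="\<lambda>I. M - I"]) (auto simp: Diff_Diff_Int Int_absorb1)

lemma sum_pow_single_compl:
  fixes n :: nat and \<psi> :: "nat \<Rightarrow> real"
  assumes "N \<subseteq> {..<n}"
  shows "(\<Sum>J\<in>Pow N. \<phi> J * (if \<exists>j<n. N - J = {j} then \<psi> (the_elem (N - J)) else 0))
     = (\<Sum>k\<in>N. \<phi> (N - {k}) * \<psi> k)"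
proof -
  have fin: "finite N" by (rule finite_subset[OF assms]) simp
  have "(\<Sum>J\<in>Pow N. \<phi> J * (if \<exists>j<n. N - J = {j} then \<psi> (the_elem (N - J)) else 0))
    = (\<Sum>J\<in>Pow N. \<phi> (N - J) * (if \<exists>j<n. N - (N - J) = {j} then \<psi> (the_elem (N - (N - J))) else 0))"
    by (rule sum_pow_compl[OF fin])
  also have "\<dots> = (\<Sum>J\<in>Pow N. if \<exists>j<n. J = {j} then \<phi> (N - J) * \<psi> (the_elem J) else 0)"
    by (rule sum.cong) (auto simp: double_diff Diff_Diff_Int Int_absorb1)
  also have "\<dots> = (\<Sum>k\<in>N. \<phi> (N - {k}) * \<psi> k)"
    by (subst sum_pow_singleton[OF assms]) simp
  finally show ?thesis .
qed

lemma wedge_vec: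
  assumes "N \<subseteq> {..<n}"
  shows "ext_wedge n (ext_of_vec n v) x N = (\<Sum>k\<in>N. sgn2 {k} (N - {k}) * v k * x (N - {k}))"
proof -
  have "ext_wedge n (ext_of_vec n v) x N =
     (\<Sum>I\<in>Pow N. sgn2 I (N - I) * (if \<exists>i<n. I = {i} then v (the_elem I) else 0) * x (N - I))"
    using assms unfolding ext_wedge_def ext_of_vec_def by simp
  also have "\<dots> = (\<Sum>I\<in>Pow N. if \<exists>i<n. I = {i} then sgn2 I (N - I) * v (the_elem I) * x (N - I) else 0)"
    by (rule sum.cong) auto
  also have "\<dots> = (\<Sum>k\<in>N. sgn2 {k} (N - {k}) * v k * x (N - {k}))"
    by (subst sum_pow_singleton[OF assms]) simp
  finally show ?thesis .
qed

lemma mult_h: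
  assumes M: "M \<subseteq> {..<n}" and N: "N \<subseteq> {..<n}"
  shows "dform_mult n D (dform_of_bilin n h) M N =
    (\<Sum>m\<in>M. \<Sum>k\<in>N. sgn2 (M - {m}) {m} * sgn2 (N - {k}) {k} * D (M - {m}) (N - {k}) * h m k)"
proof -
  define \<psi> where "\<psi> I k = (if \<exists>i<n. M - I = {i} then h (the_elem (M - I)) k else 0)" for I k
  have "dform_mult n D (dform_of_bilin n h) M N =
    (\<Sum>I\<in>Pow M. \<Sum>J\<in>Pow N. (sgn2 I (M - I) * sgn2 J (N - J) * D I J) *
        (if \<exists>j<n. N - J = {j} then \<psi> I (the_elem (N - J)) else 0))"
    unfolding dform_mult_def dform_of_bilin_def \<psi>_def
    apply (simp add: M N)
    apply (intro sum.cong refl)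
    by auto
  also have "\<dots> = (\<Sum>I\<in>Pow M. \<Sum>k\<in>N. (sgn2 I (M - I) * sgn2 (N - {k}) (N - (N - {k})) * D I (N - {k})) * \<psi> I k)"
    by (rule sum.cong[OF refl], rule sum_pow_single_compl[OF N])
  also have "\<dots> = (\<Sum>k\<in>N. \<Sum>I\<in>Pow M. (sgn2 (N - {k}) {k} * D I (N - {k}) * sgn2 I (M - I)) *
        (if \<exists>i<n. M - I = {i} then h (the_elem (M - I)) k else 0))"
    by (subst sum.swap, intro sum.cong refl) (auto simp: \<psi>_def double_diff Diff_Diff_Int Int_absorb1)
  also have "\<dots> = (\<Sum>k\<in>N. \<Sum>m\<in>M. (sgn2 (N - {k}) {k} * D (M - {m}) (N - {k})) *
        (sgn2 (M - {m}) {m} * h m k))"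
  proof (rule sum.cong[OF refl])
    fix k assume "k \<in> N"
    show "(\<Sum>I\<in>Pow M. (sgn2 (N - {k}) {k} * D I (N - {k}) * sgn2 I (M - I)) *
        (if \<exists>i<n. M - I = {i} then h (the_elem (M - I)) k else 0)) =
       (\<Sum>m\<in>M. (sgn2 (N - {k}) {k} * D (M - {m}) (N - {k})) * (sgn2 (M - {m}) {m} * h m k))"
      apply (subst sum_pow_single_compl[OF M, where \<psi>="\<lambda>i. h i k"])
      apply (rule sum.cong[OF refl])
      using M by (auto simp: Diff_Diff_Int Int_absorb1)
  qed
  also have "\<dots> = (\<Sum>m\<in>M. \<Sum>k\<in>N. sgn2 (M - {m}) {m} * sgn2 (N - {k}) {k} * D (M - {m}) (N - {k}) * h m k)"
    by (subst sum.swap) (simp add: ac_simps)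
  finally show ?thesis .
qed


definition vecf :: "nat \<Rightarrow> (nat \<Rightarrow> nat \<Rightarrow> real) \<Rightarrow> nat \<Rightarrow> (nat set \<Rightarrow> real)" where
  "vecf n h i = ext_of_vec n (bilin_endo n h (basis_vec i))"

definition Wd :: "nat \<Rightarrow> (nat \<Rightarrow> nat \<Rightarrow> real) \<Rightarrow> nat set \<Rightarrow> (nat set \<Rightarrow> real)" where
  "Wd n h M = ext_wedge_list n (map (vecf n h) (sorted_list_of_set M))"

lemma Wd_empty: "Wd n h {} = ext_one"
  unfolding Wd_def ext_wedge_list_def by simp

lemma Wd_min: "finite M \<Longrightarrow> M \<noteq> {} \<Longrightarrow>
   Wd n h M = ext_wedge n (vecf n h (Min M)) (Wd n h (M - {Min M}))"
  unfolding Wd_def ext_wedge_list_def by (simp add: sorted_list_of_set_nonempty)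

lemma bilin_coord: "m < n \<Longrightarrow> k < n \<Longrightarrow> bilin_endo n h (basis_vec m) k = h m k"
  unfolding bilin_endo_def basis_vec_def by (simp add: if_distrib cong: if_cong)

lemma wedge_outside: "\<not> N \<subseteq> {..<n} \<Longrightarrow> ext_wedge n v x N = 0"
  unfolding ext_wedge_def by simp

lemma wedge_scale: "ext_wedge n v (\<lambda>N. c * x N) = (\<lambda>N. c * ext_wedge n v x N)"
  unfolding ext_wedge_def by (auto simp: sum_distrib_left ac_simps intro!: sum.cong)

lemma Wd_supp:
  assumes "M \<subseteq> {..<n}" "Wd n h M N \<noteq> 0"
  shows "N \<subseteq> {..<n} \<and> card N = card M"
  using assms
proof (induction "card M" arbitrary: M N)
  case 0
  then have "M = {}" using finite_subset[of M "{..<n}"] by auto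
  then show ?case using 0 by (auto simp: Wd_empty ext_one_def split: if_splits)
next
  case (Suc c)
  have fin: "finite M" using Suc.prems finite_subset[of M "{..<n}"] by auto
  have ne: "M \<noteq> {}" using Suc.hyps by auto
  let ?m = "Min M"
  have mM: "?m \<in> M" using fin ne by simp
  have W: "Wd n h M N = ext_wedge n (vecf n h ?m) (Wd n h (M - {?m})) N"
    using Wd_min[OF fin ne] by simp
  have N: "N \<subseteq> {..<n}" using Suc.prems(2) W wedge_outside by metis
  have "(\<Sum>k\<in>N. sgn2 {k} (N - {k}) * bilin_endo n h (basis_vec ?m) k * Wd n h (M - {?m}) (N - {k})) \<noteq> 0"
    using Suc.prems(2) W wedge_vec[OF N] unfolding vecf_def by simp
  then obtain k where k: "k \<in> N" "Wd n h (M - {?m}) (N - {k}) \<noteq> 0"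
    by (metis (no_types, lifting) mult_zero_right sum.neutral)
  have "N - {k} \<subseteq> {..<n} \<and> card (N - {k}) = card (M - {?m})"
    by (rule Suc.hyps(1)) (use Suc.hyps(2) fin mM Suc.prems k in auto)
  moreover have "finite N" using N finite_subset by blast
  moreover have "card (M - {?m}) = c" using Suc.hyps(2) fin mM by simp
  moreover have "card (N - {k}) = card N - 1" using k(1) by simp
  moreover have "card N > 0" using k(1) \<open>finite N\<close> card_gt_0_iff by blast
  ultimately show ?case using N Suc.hyps(2) by (simp, linarith)
qed


lemma sign_pair:
  assumes "finite N" "k \<in> N" "l \<in> N" "k \<noteq> l"
  shows "sgn2 {k} (N - {k}) * sgn2 {l} (N - {k} - {l}) = - (sgn2 {l} (N - {l}) * sgn2 {k} (N - {l} - {k}))"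
proof -
  define R where "R = N - {k} - {l}"
  have R2: "N - {l} - {k} = R" unfolding R_def by auto
  have e1: "N - {k} = {l} \<union> R" unfolding R_def using assms by auto
  have e2: "N - {l} = {k} \<union> R" unfolding R_def using assms by auto
  have fR: "finite R" unfolding R_def using assms by simp
  have s1: "sgn2 {k} (N - {k}) = sgn2 {k} {l} * sgn2 {k} R"
    unfolding e1 by (rule sgn2_union_right) (use fR R_def in auto)
  have s2: "sgn2 {l} (N - {l}) = sgn2 {l} {k} * sgn2 {l} R"
    unfolding e2 by (rule sgn2_union_right) (use fR R_def in auto)
  have s3: "sgn2 {k} {l} = - sgn2 {l} {k}" using assms(4) by (auto simp: sgn2_single)
  show ?thesis unfolding R2 R_def[symmetric] s1 s2 s3 by simp
qed

lemma sum_diff_single_if: "finite N \<Longrightarrow> (\<Sum>l\<in>N - {k}. f l) = (\<Sum>l\<in>N. if l \<noteq> k then f l else 0)"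
proof -
  assume "finite N"
  have "N - {k} = {l\<in>N. l \<noteq> k}" by auto
  then show ?thesis using sum.inter_filter[OF \<open>finite N\<close>, of f "\<lambda>l. l \<noteq> k"] by simp
qed

lemma anticomm:
  "ext_wedge n (ext_of_vec n a) (ext_wedge n (ext_of_vec n b) x) =
   (\<lambda>N. - ext_wedge n (ext_of_vec n b) (ext_wedge n (ext_of_vec n a) x) N)"
proof
  fix N
  show "ext_wedge n (ext_of_vec n a) (ext_wedge n (ext_of_vec n b) x) N =
    - ext_wedge n (ext_of_vec n b) (ext_wedge n (ext_of_vec n a) x) N"
  proof (cases "N \<subseteq> {..<n}")
    case False then show ?thesis by (simp add: wedge_outside)
  next
    case True
    have fin: "finite N" using True finite_subset by blast
    have sub: "\<And>k. N - {k} \<subseteq> {..<n}" using True by auto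
    define G where "G k l = sgn2 {k} (N - {k}) * sgn2 {l} (N - {k} - {l}) * x (N - {k} - {l})" for k l
    have L: "ext_wedge n (ext_of_vec n a) (ext_wedge n (ext_of_vec n b) x) N =
       (\<Sum>k\<in>N. \<Sum>l\<in>N. if l \<noteq> k then a k * b l * G k l else 0)"
      unfolding wedge_vec[OF True] wedge_vec[OF sub]
    proof (rule sum.cong[OF refl])
      fix k assume "k \<in> N"
      have "sgn2 {k} (N - {k}) * a k * (\<Sum>l\<in>N - {k}. sgn2 {l} (N - {k} - {l}) * b l * x (N - {k} - {l}))
        = (\<Sum>l\<in>N - {k}. sgn2 {k} (N - {k}) * a k * (sgn2 {l} (N - {k} - {l}) * b l * x (N - {k} - {l})))"
        by (rule sum_distrib_left)
      also have "\<dots> = (\<Sum>l\<in>N. if l \<noteq> k then sgn2 {k} (N - {k}) * a k * (sgn2 {l} (N - {k} - {l}) * b l * x (N - {k} - {l})) else 0)"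
        by (rule sum_diff_single_if[OF fin])
      also have "\<dots> = (\<Sum>l\<in>N. if l \<noteq> k then a k * b l * G k l else 0)"
        by (rule sum.cong[OF refl]) (simp add: G_def)
      finally show "sgn2 {k} (N - {k}) * a k * (\<Sum>l\<in>N - {k}. sgn2 {l} (N - {k} - {l}) * b l * x (N - {k} - {l}))
        = (\<Sum>l\<in>N. if l \<noteq> k then a k * b l * G k l else 0)" .
    qed
    have R: "ext_wedge n (ext_of_vec n b) (ext_wedge n (ext_of_vec n a) x) N =
       (\<Sum>l\<in>N. \<Sum>k\<in>N. if k \<noteq> l then b l * a k * G l k else 0)"
      unfolding wedge_vec[OF True] wedge_vec[OF sub]
    proof (rule sum.cong[OF refl])
      fix k assume "k \<in> N"
      have "sgn2 {k} (N - {k}) * b k * (\<Sum>l\<in>N - {k}. sgn2 {l} (N - {k} - {l}) * a l * x (N - {k} - {l}))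
        = (\<Sum>l\<in>N - {k}. sgn2 {k} (N - {k}) * b k * (sgn2 {l} (N - {k} - {l}) * a l * x (N - {k} - {l})))"
        by (rule sum_distrib_left)
      also have "\<dots> = (\<Sum>l\<in>N. if l \<noteq> k then sgn2 {k} (N - {k}) * b k * (sgn2 {l} (N - {k} - {l}) * a l * x (N - {k} - {l})) else 0)"
        by (rule sum_diff_single_if[OF fin])
      also have "\<dots> = (\<Sum>l\<in>N. if l \<noteq> k then b k * a l * G k l else 0)"
        by (rule sum.cong[OF refl]) (simp add: G_def)
      finally show "sgn2 {k} (N - {k}) * b k * (\<Sum>l\<in>N - {k}. sgn2 {l} (N - {k} - {l}) * a l * x (N - {k} - {l}))
        = (\<Sum>l\<in>N. if l \<noteq> k then b k * a l * G k l else 0)" .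
    qed
    have GG: "k \<in> N \<Longrightarrow> l \<in> N \<Longrightarrow> k \<noteq> l \<Longrightarrow> G k l = - G l k" for k l
    proof -
      assume as: "k \<in> N" "l \<in> N" "k \<noteq> l"
      have "N - {l} - {k} = N - {k} - {l}" by auto
      then show ?thesis unfolding G_def using sign_pair[OF fin as] by (simp add: algebra_simps)
    qed
    have "(\<Sum>k\<in>N. \<Sum>l\<in>N. if l \<noteq> k then a k * b l * G k l else 0) =
        (\<Sum>k\<in>N. \<Sum>l\<in>N. - (if k \<noteq> l then b l * a k * G l k else 0))"
    proof (intro sum.cong refl)
      fix k l assume "k \<in> N" "l \<in> N"
      then show "(if l \<noteq> k then a k * b l * G k l else 0) = - (if k \<noteq> l then b l * a k * G l k else 0)"
        using GG[of k l] by auto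
    qed
    also have "\<dots> = - (\<Sum>l\<in>N. \<Sum>k\<in>N. if k \<noteq> l then b l * a k * G l k else 0)"
      by (subst sum.swap) (simp add: sum_negf)
    finally show ?thesis using L R by simp
  qed
qed


lemma Wd_alt:
  assumes "finite M" "m \<in> M"
  shows "Wd n h M = (\<lambda>N. sgn2 {m} (M - {m}) * ext_wedge n (vecf n h m) (Wd n h (M - {m})) N)"
  using assms
proof (induction "card M" arbitrary: M m rule: less_induct)
  case less
  have ne: "M \<noteq> {}" using less.prems by auto
  define m0 where "m0 = Min M"
  have m0M: "m0 \<in> M" unfolding m0_def using less.prems ne by simp
  have m0le: "\<And>s. s \<in> M \<Longrightarrow> m0 \<le> s" unfolding m0_def using less.prems by simp
  show ?case
  proof (cases "m = m0")
    case True
    have "sgn2 {m} (M - {m}) = 1" using True m0le by (intro sgn2_min) auto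
    then show ?thesis using Wd_min[OF less.prems(1) ne] True m0_def by simp
  next
    case False
    define M' where "M' = M - {m0}"
    have mM': "m \<in> M'" using False less.prems unfolding M'_def by auto
    have fM': "finite M'" using less.prems unfolding M'_def by simp
    have cM': "card M' < card M" unfolding M'_def using less.prems m0M
      by (metis card_Diff1_less)
    have IH: "Wd n h M' = (\<lambda>N. sgn2 {m} (M' - {m}) * ext_wedge n (vecf n h m) (Wd n h (M' - {m})) N)"
      by (rule less.hyps[OF cM' fM' mM'])
    have min2: "Min (M - {m}) = m0"
      using less.prems m0M m0le False by (intro Min_eqI) auto
    have ne2: "M - {m} \<noteq> {}" using m0M False by auto
    have set2: "M - {m} - {m0} = M' - {m}" unfolding M'_def by auto
    have W2: "Wd n h (M - {m}) = ext_wedge n (vecf n h m0) (Wd n h (M' - {m}))"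
    proof -
      have "Wd n h (M - {m}) = ext_wedge n (vecf n h (Min (M - {m}))) (Wd n h (M - {m} - {Min (M - {m})}))"
        by (rule Wd_min) (use less.prems ne2 in auto)
      then show ?thesis unfolding min2 set2 .
    qed
    have sg: "sgn2 {m} (M - {m}) = - sgn2 {m} (M' - {m})"
    proof -
      have e: "M - {m} = {m0} \<union> (M' - {m})" unfolding M'_def using m0M False by auto
      have "sgn2 {m} (M - {m}) = sgn2 {m} {m0} * sgn2 {m} (M' - {m})"
        unfolding e by (rule sgn2_union_right) (use fM' M'_def in auto)
      moreover have "m0 < m" using m0le[OF less.prems(2)] False by simp
      ultimately show ?thesis by (simp add: sgn2_single)
    qed
    have "Wd n h M = ext_wedge n (vecf n h m0) (Wd n h M')"
      using Wd_min[OF less.prems(1) ne] m0_def M'_def by simp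
    also have "\<dots> = (\<lambda>N. sgn2 {m} (M' - {m}) * ext_wedge n (vecf n h m0) (ext_wedge n (vecf n h m) (Wd n h (M' - {m}))) N)"
      unfolding IH wedge_scale ..
    also have "\<dots> = (\<lambda>N. sgn2 {m} (M' - {m}) * - ext_wedge n (vecf n h m) (ext_wedge n (vecf n h m0) (Wd n h (M' - {m}))) N)"
      unfolding vecf_def anticomm[of n "bilin_endo n h (basis_vec m0)" "bilin_endo n h (basis_vec m)"] by simp
    also have "\<dots> = (\<lambda>N. sgn2 {m} (M - {m}) * ext_wedge n (vecf n h m) (Wd n h (M - {m})) N)"
      unfolding W2 sg by simp
    finally show ?thesis .
  qed
qed


lemma row_expand:
  assumes M: "M \<subseteq> {..<n}" and mM: "m \<in> M" and N: "N \<subseteq> {..<n}"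
  shows "(\<Sum>k\<in>N. sgn2 (N - {k}) {k} * Wd n h (M - {m}) (N - {k}) * h m k)
     = sgn2 (M - {m}) {m} * Wd n h M N"
proof -
  have fM: "finite M" using M finite_subset by blast
  have fN: "finite N" using N finite_subset by blast
  have mn: "m < n" using M mM by auto
  have "sgn2 (M - {m}) {m} * Wd n h M N =
     (sgn2 (M - {m}) {m} * sgn2 {m} (M - {m})) *
       (\<Sum>k\<in>N. sgn2 {k} (N - {k}) * h m k * Wd n h (M - {m}) (N - {k}))"
    unfolding Wd_alt[OF fM mM] vecf_def wedge_vec[OF N]
    using N mn by (auto simp: bilin_coord intro!: sum.cong)
  also have "\<dots> = (-1) ^ card (M - {m}) *
       (\<Sum>k\<in>N. sgn2 {k} (N - {k}) * h m k * Wd n h (M - {m}) (N - {k}))"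
    using sgn2_swap_single[of "M - {m}" m] fM by simp
  also have "\<dots> = (\<Sum>k\<in>N. (-1) ^ card (M - {m}) * sgn2 {k} (N - {k}) * h m k * Wd n h (M - {m}) (N - {k}))"
    by (simp add: sum_distrib_left mult.assoc)
  also have "\<dots> = (\<Sum>k\<in>N. sgn2 (N - {k}) {k} * Wd n h (M - {m}) (N - {k}) * h m k)"
  proof (rule sum.cong[OF refl])
    fix k assume kN: "k \<in> N"
    show "(-1) ^ card (M - {m}) * sgn2 {k} (N - {k}) * h m k * Wd n h (M - {m}) (N - {k}) =
       sgn2 (N - {k}) {k} * Wd n h (M - {m}) (N - {k}) * h m k"
    proof (cases "Wd n h (M - {m}) (N - {k}) = 0")
      case True then show ?thesis by simp
    next
      case False
      have c: "card (N - {k}) = card (M - {m})"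
        using Wd_supp[OF _ False] M by auto
      have "sgn2 (N - {k}) {k} = sgn2 (N - {k}) {k} * (sgn2 {k} (N - {k}) * sgn2 {k} (N - {k}))"
        by (simp add: sgn2_sq)
      also have "\<dots> = (-1) ^ card (N - {k}) * sgn2 {k} (N - {k})"
        by (simp add: sgn2_swap_single fN mult.assoc[symmetric])
      finally show ?thesis using c by simp
    qed
  qed
  finally show ?thesis by simp
qed

lemma Dpow:
  "dform_pow n (dform_of_bilin n h) p M N =
     (if M \<subseteq> {..<n} \<and> card M = p then fact p * Wd n h M N else 0)"
proof (induction p arbitrary: M N)
  case 0
  show ?case
  proof (cases "M \<subseteq> {..<n} \<and> card M = 0")
    case True
    then have "M = {}" using finite_subset[of M "{..<n}"] by auto
    then show ?thesis by (simp add: dform_one_def Wd_empty ext_one_def)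
  next
    case False
    then show ?thesis by (auto simp: dform_one_def)
  qed
next
  case (Suc p)
  show ?case
  proof (cases "M \<subseteq> {..<n} \<and> N \<subseteq> {..<n}")
    case False
    show ?thesis
    proof (cases "M \<subseteq> {..<n}")
      case True
      then have "\<not> N \<subseteq> {..<n}" using False by blast
      moreover have "Wd n h M N = 0" using Wd_supp[OF True] calculation by blast
      ultimately show ?thesis by (simp add: dform_mult_def)
    next
      case False
      then show ?thesis by (simp add: dform_mult_def)
    qed
  next
    case True
    then have M: "M \<subseteq> {..<n}" and N: "N \<subseteq> {..<n}" by auto
    have fM: "finite M" using M finite_subset by blast
    have Mm: "\<And>m. M - {m} \<subseteq> {..<n}" using M by auto
    have "dform_pow n (dform_of_bilin n h) (Suc p) M N =
      (\<Sum>m\<in>M. \<Sum>k\<in>N. sgn2 (M - {m}) {m} * sgn2 (N - {k}) {k} *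
         (if card (M - {m}) = p then fact p * Wd n h (M - {m}) (N - {k}) else 0) * h m k)"
      by (simp add: mult_h[OF M N] Suc.IH Mm)
    also have "\<dots> = (if card M = Suc p then fact (Suc p) * Wd n h M N else 0)"
    proof (cases "card M = Suc p")
      case False
      have "\<And>m. m \<in> M \<Longrightarrow> card (M - {m}) \<noteq> p"
      proof -
        fix m assume mM: "m \<in> M"
        have "card M > 0" using mM fM card_gt_0_iff by blast
        moreover have "card (M - {m}) = card M - 1" using mM by simp
        ultimately show "card (M - {m}) \<noteq> p" using False by linarith
      qed
      then show ?thesis using False by simp
    next
      case True
      have "(\<Sum>m\<in>M. \<Sum>k\<in>N. sgn2 (M - {m}) {m} * sgn2 (N - {k}) {k} *
         (if card (M - {m}) = p then fact p * Wd n h (M - {m}) (N - {k}) else 0) * h m k)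
        = (\<Sum>m\<in>M. sgn2 (M - {m}) {m} * fact p *
             (\<Sum>k\<in>N. sgn2 (N - {k}) {k} * Wd n h (M - {m}) (N - {k}) * h m k))"
      proof (rule sum.cong[OF refl])
        fix m assume mM: "m \<in> M"
        have c: "card (M - {m}) = p" using mM True by simp
        show "(\<Sum>k\<in>N. sgn2 (M - {m}) {m} * sgn2 (N - {k}) {k} *
         (if card (M - {m}) = p then fact p * Wd n h (M - {m}) (N - {k}) else 0) * h m k)
          = sgn2 (M - {m}) {m} * fact p *
             (\<Sum>k\<in>N. sgn2 (N - {k}) {k} * Wd n h (M - {m}) (N - {k}) * h m k)"
          unfolding c sum_distrib_left by (simp add: mult.assoc mult.left_commute)
      qed
      also have "\<dots> = (\<Sum>m\<in>M. fact p * Wd n h M N)"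
      proof (rule sum.cong[OF refl])
        fix m assume mM: "m \<in> M"
        have "sgn2 (M - {m}) {m} * fact p *
             (\<Sum>k\<in>N. sgn2 (N - {k}) {k} * Wd n h (M - {m}) (N - {k}) * h m k)
          = fact p * (sgn2 (M - {m}) {m} * sgn2 (M - {m}) {m}) * Wd n h M N"
          unfolding row_expand[OF M mM N] by (simp only: mult.assoc mult.left_commute)
        then show "sgn2 (M - {m}) {m} * fact p *
             (\<Sum>k\<in>N. sgn2 (N - {k}) {k} * Wd n h (M - {m}) (N - {k}) * h m k)
          = fact p * Wd n h M N" by (simp only: sgn2_sq mult_1_right)
      qed
      also have "\<dots> = fact (Suc p) * Wd n h M N" using True by simp
      finally show ?thesis using True by simp
    qed
    finally show ?thesis using M by simp
  qed
qed


lemma Wd_g: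
  assumes "I \<subseteq> {..<n}"
  shows "Wd n metric_g I N = (if N = I then 1 else 0)"
  using assms
proof (induction "card I" arbitrary: I N rule: less_induct)
  case less
  have fI: "finite I" using less.prems finite_subset by blast
  show ?case
  proof (cases "I = {}")
    case True then show ?thesis by (simp add: Wd_empty ext_one_def)
  next
    case False
    define m0 where "m0 = Min I"
    have m0I: "m0 \<in> I" unfolding m0_def using fI False by simp
    have m0le: "\<And>s. s \<in> I \<Longrightarrow> m0 \<le> s" unfolding m0_def using fI by simp
    have m0n: "m0 < n" using m0I less.prems by auto
    have cI: "card (I - {m0}) < card I" using fI m0I by (metis card_Diff1_less)
    have IH: "\<And>N. Wd n metric_g (I - {m0}) N = (if N = I - {m0} then 1 else 0)"
    proof -
      have sub: "I - {m0} \<subseteq> {..<n}" using less.prems by auto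
      show "\<And>N. Wd n metric_g (I - {m0}) N = (if N = I - {m0} then 1 else 0)"
        using less.hyps[OF cI sub] by blast
    qed
    have W: "Wd n metric_g I N = ext_wedge n (vecf n metric_g m0) (Wd n metric_g (I - {m0})) N"
      using Wd_min[OF fI False] m0_def by simp
    show ?thesis
    proof (cases "N \<subseteq> {..<n}")
      case False
      then show ?thesis using W wedge_outside less.prems by auto
    next
      case True
      have "Wd n metric_g I N = (\<Sum>k\<in>N. if k = m0 then
          (sgn2 {k} (N - {k}) * (if N - {k} = I - {m0} then 1 else 0)) else 0)"
        unfolding W vecf_def wedge_vec[OF True] IH
        using True m0n by (intro sum.cong refl) (auto simp: bilin_coord metric_g_def)
      also have "\<dots> = (if m0 \<in> N then sgn2 {m0} (N - {m0}) * (if N - {m0} = I - {m0} then 1 else 0) else 0)"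
        using True finite_subset[OF True] by (simp add: sum.delta)
      also have "\<dots> = (if N = I then 1 else 0)"
      proof -
        have "(m0 \<in> N \<and> N - {m0} = I - {m0}) = (N = I)" using m0I by blast
        moreover have "sgn2 {m0} (I - {m0}) = 1" using m0le by (intro sgn2_min) auto
        ultimately show ?thesis by auto
      qed
      finally show ?thesis .
    qed
  qed
qed

theorem mainTheorem6:
  fixes n :: nat and h :: "nat \<Rightarrow> nat \<Rightarrow> real"
  shows "Tmap n (dform_exp n (dform_of_bilin n h)) = ext_hat n h
    \<and> (\<forall>p u. (\<forall>I. u I \<noteq> 0 \<longrightarrow> I \<subseteq> {..<n} \<and> card I = p) \<longrightarrow>
         Tmap n (\<lambda>I J. dform_pow n (dform_of_bilin n metric_g) p I J / fact p) u = u)"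
proof (intro conjI allI impI)
  have cardI: "\<And>I. I \<subseteq> {..<n} \<Longrightarrow> card I \<le> n"
    by (metis card_lessThan card_mono finite_lessThan)
  have ex: "\<And>I J. I \<subseteq> {..<n} \<Longrightarrow> dform_exp n (dform_of_bilin n h) I J = Wd n h I J"
  proof -
    fix I J assume I: "I \<subseteq> {..<n}"
    have "dform_exp n (dform_of_bilin n h) I J = (\<Sum>p\<le>n. if card I = p then Wd n h I J else 0)"
      unfolding dform_exp_def Dpow using I by (intro sum.cong refl) auto
    also have "\<dots> = Wd n h I J" using cardI[OF I] by (simp add: sum.delta)
    finally show "dform_exp n (dform_of_bilin n h) I J = Wd n h I J" .
  qed
  show "Tmap n (dform_exp n (dform_of_bilin n h)) = ext_hat n h"
  proof (intro ext)
    fix u J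
    show "Tmap n (dform_exp n (dform_of_bilin n h)) u J = ext_hat n h u J"
    proof (cases "J \<subseteq> {..<n}")
      case True
      have "Tmap n (dform_exp n (dform_of_bilin n h)) u J = (\<Sum>I\<in>Pow {..<n}. u I * Wd n h I J)"
        unfolding Tmap_def using True by (auto simp: ex mult.commute intro!: sum.cong)
      moreover have "ext_hat n h u J = (\<Sum>I\<in>Pow {..<n}. u I * Wd n h I J)"
        unfolding ext_hat_def Wd_def vecf_def by simp
      ultimately show ?thesis by simp
    next
      case False
      have "\<And>I. I \<subseteq> {..<n} \<Longrightarrow> Wd n h I J = 0" using Wd_supp False by blast
      then show ?thesis using False unfolding Tmap_def ext_hat_def
        by (simp add: Wd_def[symmetric] vecf_def[symmetric])
    qed
  qed
next
  fix p :: nat and u :: "nat set \<Rightarrow> real"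
  assume hu: "\<forall>I. u I \<noteq> 0 \<longrightarrow> I \<subseteq> {..<n} \<and> card I = p"
  show "Tmap n (\<lambda>I J. dform_pow n (dform_of_bilin n metric_g) p I J / fact p) u = u"
  proof
    fix J
    show "Tmap n (\<lambda>I J. dform_pow n (dform_of_bilin n metric_g) p I J / fact p) u J = u J"
    proof (cases "J \<subseteq> {..<n}")
      case False
      then show ?thesis using hu unfolding Tmap_def by auto
    next
      case True
      have "Tmap n (\<lambda>I J. dform_pow n (dform_of_bilin n metric_g) p I J / fact p) u J =
          (\<Sum>I\<in>Pow {..<n}. if I = J then (if card J = p then u J else 0) else 0)"
      proof -
        have "Tmap n (\<lambda>I J. dform_pow n (dform_of_bilin n metric_g) p I J / fact p) u J =
          (\<Sum>I\<in>Pow {..<n}. (if I \<subseteq> {..<n} \<and> card I = p then fact p * Wd n metric_g I J else 0) / fact p * u I)"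
          unfolding Tmap_def Dpow using True by simp
        also have "\<dots> = (\<Sum>I\<in>Pow {..<n}. if I = J then (if card J = p then u J else 0) else 0)"
        proof (rule sum.cong[OF refl])
          fix I assume "I \<in> Pow {..<n}"
          then show "(if I \<subseteq> {..<n} \<and> card I = p then fact p * Wd n metric_g I J else 0) / fact p * u I =
            (if I = J then (if card J = p then u J else 0) else 0)"
            by (auto simp: Wd_g)
        qed
        finally show ?thesis .
      qed
      also have "\<dots> = (if card J = p then u J else 0)" using True by (simp add: sum.delta')
      also have "\<dots> = u J" using hu by auto
      finally show ?thesis .
    qed
  qed
qed

end
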